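(* Let $X$ be a set and $\{d_r\colon X\times X\to\mathbb{R}_{\ge0}\cup\{\infty\}\}_{r>0}$ a family satisfying the weaker $\{d_r\}$-axioms (see context). For $r,\varepsilon>0$ set $U_r^\varepsilon=\{(x,y)\in X\times X\mid d_r(x,y)<\varepsilon\}$, and call $U\subset X\times X$ an entourage if $U_r^\varepsilon\subset U$ for some $r>0,\varepsilon>0$. Then the collection $\mathcal U$ of all entourages is a quasi-uniformity on $X$. Moreover, if $d_r(x,y)=d_r(y,x)$ for all $x,y\in X$ and $r>0$, then $\mathcal U$ is a uniformity.
   Context: The weaker $\{d_r\}$-axioms, required for all $x,y,z\in X$: (Self-distance) $d_r(x,x)=0$ for all $r>0$. (Upper semi-continuity) if $r_1\le r_2$ then $d_{r_1}(x,y)\le d_{r_2}(x,y)$; and if $d_r(x,y)<\varepsilon$ there is $\delta>0$ with $d_{r+\delta}(x,y)<\varepsilon$. (Weaker triangle inequality) for $r_1,r_2,r_3>0$, if $d_{r_1+r_2+r_3}(x,y)<r_3$ and $d_{r_1+r_2+r_3}(y,z)<r_2$, then $d_{r_1}(x,z)\le d_{r_1+r_2+r_3}(x,y)+d_{r_1+r_2+r_3}(y,z)$. A quasi-uniformity on $X$ is a collection $\mathcal U$ of subsets of $X\times X$ such that: supersets of members are members; it is closed under finite intersections; every member contains the diagonal; for each $U\in\mathcal U$ there is $V\in\mathcal U$ with $V\circ V\subset U$, where $U\circ V=\{(x,z)\mid \exists y,\ (x,y)\in U,(y,z)\in V\}$. It is a uniformity if additionally $U\in\mathcal U$ implies $U^{-1}=\{(y,x)\mid(x,y)\in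 U\}\in\mathcal U$. *)

theory Defs
  imports "HOL-Analysis.Analysis"
begin

text \<open>The set X is the type 'a; the family d_r : X x X -> [0,\<infinity>] is
  d :: real => 'a => 'a => ennreal, only meaningful for r > 0.\<close>

definition weaker_dr_axioms :: "(real \<Rightarrow> 'a \<Rightarrow> 'a \<Rightarrow> ennreal) \<Rightarrow> bool" where
  "weaker_dr_axioms d \<longleftrightarrow>
     (\<forall>x r. r > 0 \<longrightarrow> d r x x = 0) \<and>
     (\<forall>x y r1 r2. 0 < r1 \<longrightarrow> r1 \<le> r2 \<longrightarrow> d r1 x y \<le> d r2 x y) \<and>
     (\<forall>x y r (\<epsilon>::real). r > 0 \<longrightarrow> d r x y < ennreal \<epsilon> \<longrightarrow>
        (\<exists>\<delta>>0. d (r + \<delta>) x y < ennreal \<epsilon>)) \<and>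
     (\<forall>x y z r1 r2 r3. r1 > 0 \<longrightarrow> r2 > 0 \<longrightarrow> r3 > 0 \<longrightarrow>
        d (r1 + r2 + r3) x y < ennreal r3 \<longrightarrow> d (r1 + r2 + r3) y z < ennreal r2 \<longrightarrow>
        d r1 x z \<le> d (r1 + r2 + r3) x y + d (r1 + r2 + r3) y z)"

definition is_quasi_uniformity :: "('a \<times> 'a) set set \<Rightarrow> bool" where
  "is_quasi_uniformity \<U> \<longleftrightarrow>
     (\<forall>U\<in>\<U>. \<forall>V. U \<subseteq> V \<longrightarrow> V \<in> \<U>) \<and>
     (\<forall>U\<in>\<U>. \<forall>V\<in>\<U>. U \<inter> V \<in> \<U>) \<and>
     (\<forall>U\<in>\<U>. Id \<subseteq> U) \<and>
     (\<forall>U\<in>\<U>. \<exists>V\<in>\<U>. V O V \<subseteq> U)"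

definition is_uniformity :: "('a \<times> 'a) set set \<Rightarrow> bool" where
  "is_uniformity \<U> \<longleftrightarrow> is_quasi_uniformity \<U> \<and> (\<forall>U\<in>\<U>. U\<inverse> \<in> \<U>)"

definition dr_entourages :: "(real \<Rightarrow> 'a \<Rightarrow> 'a \<Rightarrow> ennreal) \<Rightarrow> ('a \<times> 'a) set set" where
  "dr_entourages d = {U. \<exists>r>0. \<exists>\<epsilon>::real>0. {(x, y). d r x y < ennreal \<epsilon>} \<subseteq> U}"

end

theory Submission
  imports Defs
begin

theorem proposition4p6:
  fixes d :: "real \<Rightarrow> 'a \<Rightarrow> 'a \<Rightarrow> ennreal"
  assumes "weaker_dr_axioms d"
  shows "is_quasi_uniformity (dr_entourages d) \<and>
         ((\<forall>r>0. \<forall>x y. d r x y = d r y x) \<longrightarrow> is_uniformity (dr_entourages d))"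
proof -
  have self: "\<And>x r. r > 0 \<Longrightarrow> d r x x = 0"
    and mono: "\<And>x y r1 r2. 0 < r1 \<Longrightarrow> r1 \<le> r2 \<Longrightarrow> d r1 x y \<le> d r2 x y"
    and tri: "\<And>x y z r1 r2 r3. r1 > 0 \<Longrightarrow> r2 > 0 \<Longrightarrow> r3 > 0 \<Longrightarrow>
        d (r1 + r2 + r3) x y < ennreal r3 \<Longrightarrow> d (r1 + r2 + r3) y z < ennreal r2 \<Longrightarrow>
        d r1 x z \<le> d (r1 + r2 + r3) x y + d (r1 + r2 + r3) y z"
    using assms unfolding weaker_dr_axioms_def by blast+
  have up: "\<forall>U\<in>dr_entourages d. \<forall>V. U \<subseteq> V \<longrightarrow> V \<in> dr_entourages d"
    unfolding dr_entourages_def by blast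
  have int: "\<forall>U\<in>dr_entourages d. \<forall>V\<in>dr_entourages d. U \<inter> V \<in> dr_entourages d"
  proof (intro ballI)
    fix U V assume "U \<in> dr_entourages d" "V \<in> dr_entourages d"
    then obtain r1 e1 r2 e2 where h: "r1 > 0" "e1 > 0" "{(x, y). d r1 x y < ennreal e1} \<subseteq> U"
      "r2 > 0" "e2 > 0" "{(x, y). d r2 x y < ennreal e2} \<subseteq> V"
      unfolding dr_entourages_def by blast
    have "{(x, y). d (max r1 r2) x y < ennreal (min e1 e2)} \<subseteq> U \<inter> V"
    proof (rule subsetI)
      fix p assume "p \<in> {(x, y). d (max r1 r2) x y < ennreal (min e1 e2)}"
      then obtain x y where p: "p = (x, y)" and a: "d (max r1 r2) x y < ennreal (min e1 e2)" by blast
      have "d r1 x y \<le> d (max r1 r2) x y" "d r2 x y \<le> d (max r1 r2) x y"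
        using mono h by auto
      moreover have "ennreal (min e1 e2) \<le> ennreal e1" "ennreal (min e1 e2) \<le> ennreal e2"
        by (auto intro: ennreal_leI)
      ultimately have "d r1 x y < ennreal e1" "d r2 x y < ennreal e2"
        using a by (meson le_less_trans less_le_trans)+
      then show "p \<in> U \<inter> V" using h p by blast
    qed
    moreover have "max r1 r2 > 0" "min e1 e2 > 0" using h by auto
    ultimately show "U \<inter> V \<in> dr_entourages d" unfolding dr_entourages_def by blast
  qed
  have diag: "\<forall>U\<in>dr_entourages d. Id \<subseteq> U"
  proof
    fix U assume "U \<in> dr_entourages d"
    then obtain r e where h: "r > 0" "e > 0" "{(x, y). d r x y < ennreal e} \<subseteq> U"
      unfolding dr_entourages_def by blast
    show "Id \<subseteq> U" using h self by force
  qed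
  have comp: "\<forall>U\<in>dr_entourages d. \<exists>V\<in>dr_entourages d. V O V \<subseteq> U"
  proof
    fix U assume "U \<in> dr_entourages d"
    then obtain r e where h: "r > 0" "e > 0" "{(x, y). d r x y < ennreal e} \<subseteq> U"
      unfolding dr_entourages_def by blast
    define V where "V = {(x, y). d (r + e/2 + e/2) x y < ennreal (e/2)}"
    have "V \<in> dr_entourages d" unfolding dr_entourages_def V_def
      using h by (intro CollectI exI[of _ "r + e/2 + e/2"] conjI exI[of _ "e/2"]) auto
    moreover have "V O V \<subseteq> U"
    proof
      fix p assume "p \<in> V O V"
      then obtain x y z where p: "p = (x, z)" "(x, y) \<in> V" "(y, z) \<in> V" by blast
      then have a: "d (r + e/2 + e/2) x y < ennreal (e/2)" "d (r + e/2 + e/2) y z < ennreal (e/2)"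
        unfolding V_def by auto
      have "d r x z \<le> d (r + e/2 + e/2) x y + d (r + e/2 + e/2) y z"
        using tri[OF h(1) _ _ a] h by auto
      also have "\<dots> < ennreal (e/2 + e/2)" using add_mono_ennreal[OF a] .
      finally have "d r x z < ennreal e" by simp
      then show "p \<in> U" using h p by blast
    qed
    ultimately show "\<exists>V\<in>dr_entourages d. V O V \<subseteq> U" by blast
  qed
  have qu: "is_quasi_uniformity (dr_entourages d)"
    unfolding is_quasi_uniformity_def using up int diag comp by blast
  moreover have "(\<forall>r>0. \<forall>x y. d r x y = d r y x) \<longrightarrow> is_uniformity (dr_entourages d)"
  proof
    assume s: "\<forall>r>0. \<forall>x y. d r x y = d r y x"
    have "\<forall>U\<in>dr_entourages d. U\<inverse> \<in> dr_entourages d"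
    proof
      fix U assume "U \<in> dr_entourages d"
      then obtain r e where h: "r > 0" "e > 0" "{(x, y). d r x y < ennreal e} \<subseteq> U"
        unfolding dr_entourages_def by blast
      have "{(x, y). d r x y < ennreal e} \<subseteq> U\<inverse>" using h s by auto
      then show "U\<inverse> \<in> dr_entourages d" unfolding dr_entourages_def using h by blast
    qed
    then show "is_uniformity (dr_entourages d)" unfolding is_uniformity_def using qu by blast
  qed
  ultimately show ?thesis by blast
qed

end
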